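(* Let $d\ge2$, $k\ge1$, $U=U_1\times\cdots\times U_d$ with pairwise disjoint $U_i$, and $T\subseteq U$. Let $\mathbb F$ be a field of characteristic $2$ with $|\mathbb F|\ge N$. Let $f:\bigcup_{i=2}^dU_i\to\mathbb F$ be injective, and let $\chi(b)=(1,f(b),\dots,f(b)^{(d-1)k-1})\in\mathbb F^{(d-1)k}$. For $t\in T$ let $M_t=\chi(t[2])\wedge\cdots\wedge\chi(t[d])\in\Lambda(\mathbb F^{(d-1)k})$. Let $y_t$ ($t\in T$) and $z$ be indeterminates. For $a\in U_1$ let $Q_a=\sum_{t\in T:t[1]=a}M_ty_t$, and set $$P(z)=\prod_{a\in U_1}(1+zQ_a).$$ Then $P$ has $z$-degree at most $k$. Moreover, the coefficient of $z^ke_{[(d-1)k]}$ in $P(z)$ is a nonzero polynomial in the variables $\{y_t\}$ if and only if $T$ contains $k$ pairwise disjoint tuples.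
   Context: $\Lambda(\mathbb F^{r})$ is the exterior algebra over $\mathbb F^r$ with basis $\{e_I:I\subseteq[r]\}$ and $e_{[r]}=e_1\wedge\cdots\wedge e_r$. Vectors are identified with degree-one elements. Since $\mathbb F$ has characteristic $2$, this algebra is commutative. Coefficients are taken in the polynomial ring $\mathbb F[\{y_t\}]$. Tuples $a,b\in U$ are disjoint if $a[i]\ne b[i]$ for all $i=1,\dots,d$. *)

theory Defs
  imports "HOL-Library.Poly_Mapping"
begin

text \<open>In this development the variables are of type 'u list option:
  Some t is the indeterminate y_t and None is the indeterminate z.\<close>

type_synonym ('v, 'a) mpoly = "('v \<Rightarrow>\<^sub>0 nat) \<Rightarrow>\<^sub>0 'a"

definition mp_var :: "'v \<Rightarrow> ('v, 'a::comm_ring_1) mpoly" where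
  "mp_var v = Poly_Mapping.single (Poly_Mapping.single v 1) 1"

definition mp_const :: "'a::comm_ring_1 \<Rightarrow> ('v, 'a) mpoly" where
  "mp_const c = Poly_Mapping.single 0 c"

text \<open>Exterior algebra Lambda(F^r) with coefficients in a commutative ring R of
  characteristic 2: an element is a function from index sets I \<subseteq> {0..<r}
  (basis vector e_I) to R. Since the characteristic is 2 no signs appear:
  e_I \<and> e_J = e_(I \<union> J) if I, J are disjoint and 0 otherwise.\<close>

type_synonym 'r ext = "nat set \<Rightarrow> 'r"

definition ext_one :: "'r::comm_ring_1 ext" where
  "ext_one = (\<lambda>K. if K = {} then 1 else 0)"

definition ext_add :: "'r::comm_ring_1 ext \<Rightarrow> 'r ext \<Rightarrow> 'r ext" where
  "ext_add x y = (\<lambda>K. x K + y K)"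

definition ext_mult :: "nat \<Rightarrow> 'r::comm_ring_1 ext \<Rightarrow> 'r ext \<Rightarrow> 'r ext" where
  "ext_mult r x y = (\<lambda>K. if K \<subseteq> {0..<r} then (\<Sum>I\<in>Pow K. x I * y (K - I)) else 0)"

text \<open>The vector chi(b) = (1, f b, ..., f b ^ (r-1)) as a degree-one element
  (basis vectors e_{i} for i < r, 0-based).\<close>

definition chi :: "nat \<Rightarrow> ('u \<Rightarrow> 'a::field) \<Rightarrow> 'u \<Rightarrow> ('v, 'a) mpoly ext" where
  "chi r f b = (\<lambda>K. if \<exists>i<r. K = {i} then mp_const (f b ^ (THE i. K = {i})) else 0)"

text \<open>Tuples t \<in> U_1 \<times> ... \<times> U_d are lists of length d; component t[i+1] is t ! i.
  M_t = chi(t[2]) \<and> ... \<and> chi(t[d]).\<close>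

definition M_elem :: "nat \<Rightarrow> nat \<Rightarrow> ('u \<Rightarrow> 'a::field) \<Rightarrow> 'u list \<Rightarrow> ('v, 'a) mpoly ext" where
  "M_elem d r f t = foldr (\<lambda>i acc. ext_mult r (chi r f (t ! i)) acc) [1..<d] ext_one"

definition Q_elem :: "nat \<Rightarrow> nat \<Rightarrow> ('u \<Rightarrow> 'a::field) \<Rightarrow> 'u list set \<Rightarrow> 'u
    \<Rightarrow> ('u list option, 'a) mpoly ext" where
  "Q_elem d r f T a = (\<lambda>K. \<Sum>t\<in>{t\<in>T. t ! 0 = a}. M_elem d r f t K * mp_var (Some t))"

text \<open>P(z) = prod over a \<in> U_1 of (1 + z Q_a).  The product in the (commutative,
  since char 2) exterior algebra is taken via Finite_Set.fold.\<close>

definition P_elem :: "nat \<Rightarrow> nat \<Rightarrow> ('u \<Rightarrow> 'a::field) \<Rightarrow> 'u list set \<Rightarrow> 'u set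
    \<Rightarrow> ('u list option, 'a) mpoly ext" where
  "P_elem d r f T U1 = Finite_Set.fold
     (\<lambda>a acc. ext_mult r (ext_add ext_one (\<lambda>K. mp_var None * Q_elem d r f T a K)) acc)
     ext_one U1"

definition z_degree_le :: "('u list option, 'a::comm_ring_1) mpoly ext \<Rightarrow> nat \<Rightarrow> bool" where
  "z_degree_le x k \<longleftrightarrow> (\<forall>K. \<forall>m\<in>Poly_Mapping.keys (x K). Poly_Mapping.lookup m None \<le> k)"

text \<open>The coefficient of z^k in a polynomial p, as a polynomial in the remaining
  variables, is nonzero iff some z-free monomial m has m * z^k in the support of p.\<close>

definition zcoeff_nonzero :: "('u list option, 'a::comm_ring_1) mpoly \<Rightarrow> nat \<Rightarrow> bool" where
  "zcoeff_nonzero p k \<longleftrightarrow>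
     (\<exists>m. Poly_Mapping.lookup m None = 0 \<and> Poly_Mapping.lookup p (m + Poly_Mapping.single None k) \<noteq> 0)"

end

theory Submission
  imports Defs Complex_Main
begin

lemma ext_mult_comm: "ext_mult r x y = ext_mult r y x"
  unfolding ext_mult_def
proof (rule ext)
  fix K
  have "(\<Sum>I\<in>Pow K. x I * y (K - I)) = (\<Sum>I\<in>Pow K. y I * x (K - I))"
    by (rule sum.reindex_bij_witness[of _ "\<lambda>I. K - I" "\<lambda>I. K - I"]) (auto simp: mult.commute double_diff)
  thus "(if K \<subseteq> {0..<r} then \<Sum>I\<in>Pow K. x I * y (K - I) else 0) =
         (if K \<subseteq> {0..<r} then \<Sum>I\<in>Pow K. y I * x (K - I) else 0)" by simp
qed

lemma aux_diff: "b \<subseteq> a \<Longrightarrow> a \<subseteq> K \<Longrightarrow> K - b - (a - b) = K - a" by blast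

lemma ext_mult_assoc: "ext_mult r (ext_mult r x y) w = ext_mult r x (ext_mult r y w)"
proof (rule ext)
  fix K show "ext_mult r (ext_mult r x y) w K = ext_mult r x (ext_mult r y w) K"
  proof (cases "K \<subseteq> {0..<r}")
    case False thus ?thesis by (simp add: ext_mult_def)
  next
    case True
    hence fin: "finite K" using finite_subset by blast
    have "ext_mult r (ext_mult r x y) w K = (\<Sum>I\<in>Pow K. (\<Sum>J\<in>Pow I. x J * y (I - J)) * w (K - I))"
      using True by (auto simp: ext_mult_def intro!: sum.cong)
    also have "\<dots> = (\<Sum>(I,J)\<in>(SIGMA I:Pow K. Pow I). x J * y (I - J) * w (K - I))"
      using fin by (simp add: sum_distrib_right sum.Sigma finite_subset)
    also have "\<dots> = (\<Sum>(J,L)\<in>(SIGMA J:Pow K. Pow (K - J)). x J * (y L * w (K - J - L)))"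
      by (rule sum.reindex_bij_witness[of _ "\<lambda>(J,L). (J \<union> L, J)" "\<lambda>(I,J). (J, I - J)"])
         (auto simp: mult.assoc Un_Diff aux_diff)
    also have "\<dots> = (\<Sum>J\<in>Pow K. x J * (\<Sum>L\<in>Pow (K - J). y L * w (K - J - L)))"
      using fin by (simp add: sum_distrib_left sum.Sigma finite_subset)
    also have "\<dots> = ext_mult r x (ext_mult r y w) K"
      using True by (auto simp: ext_mult_def intro!: sum.cong)
    finally show ?thesis .
  qed
qed

definition sok :: "nat \<Rightarrow> 'r::comm_ring_1 ext \<Rightarrow> bool" where
  "sok r x \<longleftrightarrow> (\<forall>K. \<not> K \<subseteq> {0..<r} \<longrightarrow> x K = 0)"

lemma sok_mult: "sok r (ext_mult r x y)"
  by (simp add: sok_def ext_mult_def)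

lemma sok_one: "sok r ext_one"
  by (auto simp: sok_def ext_one_def)

lemma ext_mult_one: "sok r y \<Longrightarrow> ext_mult r ext_one y = y"
proof (rule ext)
  fix K assume s: "sok r y"
  show "ext_mult r ext_one y K = y K"
  proof (cases "K \<subseteq> {0..<r}")
    case False thus ?thesis using s by (simp add: ext_mult_def sok_def)
  next
    case True
    hence fin: "finite K" using finite_subset by blast
    have "(\<Sum>I\<in>Pow K. ext_one I * y (K - I)) = (\<Sum>I\<in>{{}}. ext_one I * y (K - I))"
      by (rule sum.mono_neutral_right) (auto simp: fin ext_one_def)
    thus ?thesis using True by (simp add: ext_mult_def ext_one_def)
  qed
qed

lemma ext_mult_zero: "ext_mult r (\<lambda>_. 0) y = (\<lambda>_. 0)"
  by (simp add: ext_mult_def fun_eq_iff)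

lemma ext_mult_sq:
  fixes x :: "'r::comm_ring_1 ext"
  assumes c2: "(1::'r) + 1 = 0" and x0: "x {} = 0"
  shows "ext_mult r x x = (\<lambda>_. 0)"
proof (rule ext)
  fix K
  show "ext_mult r x x K = 0"
  proof (cases "K \<subseteq> {0..<r}")
    case False thus ?thesis by (simp add: ext_mult_def)
  next
    case True
    hence fin: "finite K" using finite_subset by blast
    show ?thesis
    proof (cases "K = {}")
      case True thus ?thesis using x0 by (simp add: ext_mult_def)
    next
      case False
      then obtain e where e: "e \<in> K" by blast
      define g where "g I = x I * x (K - I)" for I
      define A where "A = {I\<in>Pow K. e \<in> I}"
      define B where "B = {I\<in>Pow K. e \<notin> I}"
      have PK: "Pow K = A \<union> B" "A \<inter> B = {}" by (auto simp: A_def B_def)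
      have fA: "finite A" "finite B" using fin by (auto simp: A_def B_def)
      have "sum g B = sum g A"
        by (rule sum.reindex_bij_witness[of _ "\<lambda>I. K - I" "\<lambda>I. K - I"])
           (auto simp: A_def B_def g_def double_diff mult.commute e)
      hence "sum g (Pow K) = (1 + 1) * sum g A"
        using PK fA by (simp add: sum.union_disjoint distrib_right)
      thus ?thesis using True c2 by (simp add: ext_mult_def g_def)
    qed
  qed
qed

lemma cfc_mult: "comp_fun_commute (\<lambda>a acc. ext_mult r (g a) acc)"
  unfolding comp_fun_commute_def
proof (intro allI ext)
  fix y x z K
  have "ext_mult r (g y) (ext_mult r (g x) z) = ext_mult r (ext_mult r (g y) (g x)) z"
    by (simp add: ext_mult_assoc)
  also have "\<dots> = ext_mult r (ext_mult r (g x) (g y)) z"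
    by (simp add: ext_mult_comm)
  also have "\<dots> = ext_mult r (g x) (ext_mult r (g y) z)"
    by (simp add: ext_mult_assoc)
  finally show "((\<lambda>acc. ext_mult r (g y) acc) \<circ> (\<lambda>acc. ext_mult r (g x) acc)) z K =
    ((\<lambda>acc. ext_mult r (g x) acc) \<circ> (\<lambda>acc. ext_mult r (g y) acc)) z K" by simp
qed

definition chif :: "nat \<Rightarrow> 'a::comm_ring_1 \<Rightarrow> 'a ext" where
  "chif r x = (\<lambda>K. if \<exists>i<r. K = {i} then x ^ (THE i. K = {i}) else 0)"

definition Vf :: "nat \<Rightarrow> 'a::comm_ring_1 list \<Rightarrow> 'a ext" where
  "Vf r xs = foldr (\<lambda>x acc. ext_mult r (chif r x) acc) xs ext_one"

lemma Vf_Nil: "Vf r [] = ext_one" by (simp add: Vf_def)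
lemma Vf_Cons: "Vf r (x#xs) = ext_mult r (chif r x) (Vf r xs)" by (simp add: Vf_def)
lemma sok_Vf: "sok r (Vf r xs)"
  by (cases xs) (simp_all add: Vf_Nil Vf_Cons sok_one sok_mult)
lemma Vf_append: "Vf r (xs @ ys) = ext_mult r (Vf r xs) (Vf r ys)"
  by (induction xs) (simp_all add: Vf_Nil Vf_Cons ext_mult_one sok_Vf ext_mult_assoc)

lemma chif_empty: "chif r x {} = 0" by (simp add: chif_def)
lemma chif_single: "i < r \<Longrightarrow> chif r x {i} = x ^ i" by (auto simp: chif_def)

lemma Vf_nondistinct:
  assumes c2: "(1::'a::comm_ring_1) + 1 = 0" and nd: "\<not> distinct (xs :: 'a list)"
  shows "Vf r xs = (\<lambda>_. 0)"
proof -
  from not_distinct_decomp[OF nd] obtain as x bs cs where xs: "xs = as @ [x] @ bs @ [x] @ cs" by blast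
  let ?X = "chif r x"
  have "ext_mult r ?X (ext_mult r (Vf r bs) (ext_mult r ?X (Vf r cs)))
      = ext_mult r ?X (ext_mult r (ext_mult r (Vf r bs) ?X) (Vf r cs))" by (simp add: ext_mult_assoc)
  also have "\<dots> = ext_mult r ?X (ext_mult r (ext_mult r ?X (Vf r bs)) (Vf r cs))" by (simp add: ext_mult_comm)
  also have "\<dots> = ext_mult r (ext_mult r ?X ?X) (ext_mult r (Vf r bs) (Vf r cs))" by (simp add: ext_mult_assoc)
  also have "\<dots> = (\<lambda>_. 0)" using ext_mult_sq[OF c2, of ?X] by (simp add: chif_empty ext_mult_zero)
  finally show ?thesis using xs
    by (simp add: Vf_append Vf_Cons Vf_Nil ext_mult_comm[of r "Vf r as"] ext_mult_zero)
qed

lemma Vf_Cons_expand: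
  assumes "K \<subseteq> {0..<r}"
  shows "Vf r (x#xs) K = (\<Sum>i\<in>K. x ^ i * Vf r xs (K - {i}))"
proof -
  have fin: "finite K" using assms finite_subset by blast
  have "Vf r (x#xs) K = (\<Sum>I\<in>Pow K. chif r x I * Vf r xs (K - I))"
    using assms by (simp add: Vf_Cons ext_mult_def)
  also have "\<dots> = (\<Sum>I\<in>(\<lambda>i. {i}) ` K. chif r x I * Vf r xs (K - I))"
    by (rule sum.mono_neutral_right) (auto simp: fin chif_def)
  also have "\<dots> = (\<Sum>i\<in>K. chif r x {i} * Vf r xs (K - {i}))"
    by (subst sum.reindex) (auto simp: inj_on_def)
  also have "\<dots> = (\<Sum>i\<in>K. x ^ i * Vf r xs (K - {i}))"
    using assms by (intro sum.cong) (auto simp: chif_single)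
  finally show ?thesis .
qed

lemma rootbound:
  fixes c :: "nat \<Rightarrow> 'a::idom"
  assumes "c n \<noteq> 0" "finite A" "n < card A"
  shows "\<exists>z\<in>A. (\<Sum>i\<le>n. c i * z^i) \<noteq> 0"
  using assms
proof (induction n arbitrary: c A)
  case 0
  then obtain z where "z \<in> A" by fastforce
  thus ?case using 0 by auto
next
  case (Suc m c A)
  show ?case
  proof (rule ccontr)
    assume H: "\<not> ?case"
    from Suc.prems obtain a where a: "a \<in> A" by fastforce
    define b where "b j = (\<Sum>i=Suc j..Suc m. c i * a^(i - j - 1))" for j
    have bm: "b m = c (Suc m)" by (simp add: b_def)
    have q0: "(\<Sum>j\<le>m. b j * z^j) = 0" if z: "z \<in> A - {a}" for z
    proof -
      have "(\<Sum>i\<le>Suc m. c i * z^i) - (\<Sum>i\<le>Suc m. c i * a^i) = (z - a) * (\<Sum>j<Suc m. b j * z^j)"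
        unfolding b_def by (rule polyfun_diff) simp
      hence "(z - a) * (\<Sum>j<Suc m. b j * z^j) = 0" using H a z by auto
      thus ?thesis using z by (simp add: lessThan_Suc_atMost)
    qed
    have "\<exists>z\<in>A - {a}. (\<Sum>j\<le>m. b j * z^j) \<noteq> 0"
      using Suc.prems a by (intro Suc.IH) (auto simp: bm)
    thus False using q0 by blast
  qed
qed

lemma Vf_distinct_nz:
  fixes xs :: "'a::field list"
  assumes c2: "(1::'a) + 1 = 0"
  shows "distinct xs \<Longrightarrow> length xs \<le> r \<Longrightarrow> Vf r xs {0..<length xs} \<noteq> 0"
proof (induction xs)
  case Nil thus ?case by (simp add: Vf_Nil ext_one_def)
next
  case (Cons x xs)
  let ?n = "length xs"
  define c where "c i = Vf r xs ({0..<Suc ?n} - {i})" for i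
  have exp: "Vf r (z#xs) {0..<Suc ?n} = (\<Sum>i\<le>?n. c i * z^i)" for z
  proof -
    have "Vf r (z#xs) {0..<Suc ?n} = (\<Sum>i\<in>{0..<Suc ?n}. z ^ i * Vf r xs ({0..<Suc ?n} - {i}))"
      using Cons.prems by (intro Vf_Cons_expand) auto
    also have "\<dots> = (\<Sum>i\<le>?n. c i * z^i)"
      by (simp add: c_def atLeast0LessThan lessThan_Suc_atMost mult.commute)
    finally show ?thesis .
  qed
  have cn: "c ?n \<noteq> 0"
  proof -
    have "{0..<Suc ?n} - {?n} = {0..<?n}" by auto
    thus ?thesis using Cons by (simp add: c_def)
  qed
  have "\<exists>z\<in>insert x (set xs). (\<Sum>i\<le>?n. c i * z^i) \<noteq> 0"
    using Cons.prems by (intro rootbound[of c, OF cn]) (auto simp: distinct_card)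
  then obtain z where z: "z \<in> insert x (set xs)" "Vf r (z#xs) {0..<Suc ?n} \<noteq> 0"
    using exp by auto
  have "z = x"
  proof (rule ccontr)
    assume "z \<noteq> x"
    hence "\<not> distinct (z#xs)" using z by auto
    thus False using z Vf_nondistinct[OF c2] by auto
  qed
  thus ?case using z by simp
qed

definition hom :: "nat \<Rightarrow> nat \<Rightarrow> 'r::comm_ring_1 ext \<Rightarrow> bool" where
  "hom r p x \<longleftrightarrow> (\<forall>K. x K \<noteq> 0 \<longrightarrow> K \<subseteq> {0..<r} \<and> card K = p)"

lemma hom_mult:
  assumes "hom r p x" "hom r q y"
  shows "hom r (p + q) (ext_mult r x y)"
  unfolding hom_def
proof (intro allI impI)
  fix K assume nz: "ext_mult r x y K \<noteq> 0"
  hence K: "K \<subseteq> {0..<r}" by (auto simp: ext_mult_def split: if_splits)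
  hence fin: "finite K" using finite_subset by blast
  from nz K have "(\<Sum>I\<in>Pow K. x I * y (K - I)) \<noteq> 0" by (simp add: ext_mult_def)
  then obtain I where I: "I \<subseteq> K" "x I * y (K - I) \<noteq> 0"
    by (meson PowD sum.not_neutral_contains_not_neutral)
  hence "x I \<noteq> 0" "y (K - I) \<noteq> 0" by auto
  hence "card I = p" "card (K - I) = q" using assms unfolding hom_def by blast+
  moreover have "card (K - I) = card K - card I" using I fin by (simp add: card_Diff_subset finite_subset)
  moreover have "card I \<le> card K" using I fin by (simp add: card_mono)
  ultimately show "K \<subseteq> {0..<r} \<and> card K = p + q" using K by simp
qed

lemma hom_one: "hom r 0 (ext_one :: 'r::comm_ring_1 ext)"
  by (auto simp: hom_def ext_one_def)

lemma hom_chif: "hom r 1 (chif r x)"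
  by (auto simp: hom_def chif_def)

lemma hom_Vf: "hom r (length xs) (Vf r xs)"
  by (induction xs) (auto simp: Vf_Nil Vf_Cons hom_one intro: hom_mult[OF hom_chif, simplified])

lemma single_sum: "Poly_Mapping.single m (sum g A) = (\<Sum>x\<in>A. Poly_Mapping.single m (g x))"
  by (induction A rule: infinite_finite_induct) (simp_all add: single_add)

definition mpc :: "'a::comm_ring_1 ext \<Rightarrow> ('v, 'a) mpoly ext" where
  "mpc x = (\<lambda>K. mp_const (x K))"

lemma mp_const_mult: "mp_const (a * b) = (mp_const a * mp_const b :: ('v,'a::comm_ring_1) mpoly)"
  by (simp add: mp_const_def mult_single)

lemma mp_const_add: "mp_const (a + b) = (mp_const a + mp_const b :: ('v,'a::comm_ring_1) mpoly)"
  by (simp add: mp_const_def single_add)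

lemma mp_const_sum: "mp_const (sum g A) = (\<Sum>x\<in>A. mp_const (g x) :: ('v,'a::comm_ring_1) mpoly)"
  by (simp add: mp_const_def single_sum)

lemma mp_const_zero: "(mp_const 0 :: ('v,'a::comm_ring_1) mpoly) = 0"
  by (simp add: mp_const_def)

lemma mpc_mult: "ext_mult r (mpc x) (mpc y) = (mpc (ext_mult r x y) :: ('v,'a::comm_ring_1) mpoly ext)"
  by (auto simp: fun_eq_iff ext_mult_def mpc_def mp_const_sum mp_const_mult mp_const_zero)

lemma mpc_one: "(mpc ext_one :: ('v,'a::comm_ring_1) mpoly ext) = ext_one"
  by (auto simp: fun_eq_iff ext_one_def mpc_def mp_const_def)

lemma chi_mpc: "(chi r f b :: ('v,'a::field) mpoly ext) = mpc (chif r (f b))"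
  by (auto simp: fun_eq_iff chi_def chif_def mpc_def mp_const_def)

definition Mf :: "nat \<Rightarrow> nat \<Rightarrow> ('u \<Rightarrow> 'a::comm_ring_1) \<Rightarrow> 'u list \<Rightarrow> 'a ext" where
  "Mf d r f t = Vf r (map (\<lambda>i. f (t ! i)) [1..<d])"

lemma foldr_chi: "foldr (\<lambda>i acc. ext_mult r (chi r f (t ! i)) acc) is ext_one
   = (mpc (Vf r (map (\<lambda>i. f (t ! i)) is)) :: ('v,'a::field) mpoly ext)"
  by (induction "is") (simp_all add: Vf_Nil Vf_Cons mpc_one chi_mpc mpc_mult)

lemma M_elem_eq: "(M_elem d r f t :: ('v,'a::field) mpoly ext) = mpc (Mf d r f t)"
  by (simp add: M_elem_def Mf_def foldr_chi)

lemma fold_mult_insert: "finite S \<Longrightarrow> t \<notin> S \<Longrightarrow>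
  Finite_Set.fold (\<lambda>a acc. ext_mult r (g a) acc) z (insert t S) = ext_mult r (g t) (Finite_Set.fold (\<lambda>a acc. ext_mult r (g a) acc) z S)"
  by (rule comp_fun_commute_on.fold_insert[OF cfc_mult[unfolded comp_fun_commute_def']]) auto

definition Wf :: "nat \<Rightarrow> nat \<Rightarrow> ('u \<Rightarrow> 'a::comm_ring_1) \<Rightarrow> 'u list set \<Rightarrow> 'a ext" where
  "Wf d r f S = Finite_Set.fold (\<lambda>t acc. ext_mult r (Mf d r f t) acc) ext_one S"

lemma Wf_empty: "Wf d r f {} = ext_one" by (simp add: Wf_def)

lemma Wf_insert: "finite S \<Longrightarrow> t \<notin> S \<Longrightarrow> Wf d r f (insert t S) = ext_mult r (Mf d r f t) (Wf d r f S)"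
  unfolding Wf_def by (rule fold_mult_insert)

lemma sok_Wf: "sok r (Wf d r f S)"
proof (cases "finite S")
  case True thus ?thesis
    by (induction S rule: finite_induct) (simp_all add: Wf_empty Wf_insert sok_one sok_mult)
next
  case False thus ?thesis by (simp add: Wf_def sok_one)
qed

lemma hom_Wf: "finite S \<Longrightarrow> hom r ((d - 1) * card S) (Wf d r f S)"
proof (induction S rule: finite_induct)
  case empty thus ?case by (simp add: Wf_empty hom_one)
next
  case (insert t S)
  have "hom r (d - 1) (Mf d r f t)" using hom_Vf[of r "map (\<lambda>i. f (t ! i)) [1..<d]"] by (simp add: Mf_def)
  hence "hom r ((d - 1) + (d - 1) * card S) (Wf d r f (insert t S))"
    using insert by (simp add: Wf_insert hom_mult)
  thus ?case using insert by simp
qed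

lemma Wf_list: "distinct ts \<Longrightarrow> Wf d r f (set ts) = Vf r (concat (map (\<lambda>t. map (\<lambda>i. f (t ! i)) [1..<d]) ts))"
  by (induction ts) (simp_all add: Wf_empty Vf_Nil Wf_insert Vf_append Mf_def)

definition Tsel :: "'u list set \<Rightarrow> 'u set \<Rightarrow> 'u list set set" where
  "Tsel T B = {S. S \<subseteq> {t\<in>T. t ! 0 \<in> B} \<and> inj_on (\<lambda>t. t ! 0) S}"

definition monS :: "'u list set \<Rightarrow> ('u list option \<Rightarrow>\<^sub>0 nat)" where
  "monS S = Poly_Mapping.single None (card S) + (\<Sum>t\<in>S. Poly_Mapping.single (Some t) 1)"

definition Pf :: "nat \<Rightarrow> nat \<Rightarrow> ('u \<Rightarrow> 'a::field) \<Rightarrow> 'u list set \<Rightarrow> 'u set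
    \<Rightarrow> ('u list option, 'a) mpoly ext" where
  "Pf d r f T B = Finite_Set.fold
     (\<lambda>a acc. ext_mult r (ext_add ext_one (\<lambda>K. mp_var None * Q_elem d r f T a K)) acc)
     ext_one B"

lemma sok_Pf: "sok r (Pf d r f T B)"
proof (cases "finite B")
  case True thus ?thesis
    by (induction B rule: finite_induct) (simp_all add: Pf_def fold_mult_insert sok_one sok_mult)
next
  case False thus ?thesis by (simp add: Pf_def sok_one)
qed

lemma term_eq:
  "mp_var None * (mp_const c * mp_var (Some t)) * Poly_Mapping.single m w
   = Poly_Mapping.single (Poly_Mapping.single None 1 + Poly_Mapping.single (Some t) 1 + m) (c * w)"
  by (simp add: mp_var_def mp_const_def mult_single ac_simps)

lemma monS_insert: "finite S \<Longrightarrow> t \<notin> S \<Longrightarrow>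
   monS (insert t S) = Poly_Mapping.single None 1 + Poly_Mapping.single (Some t) 1 + monS S"
proof -
  assume a: "finite S" "t \<notin> S"
  have eq: "Poly_Mapping.single None (Suc (card S)) = Poly_Mapping.single None (card S) + Poly_Mapping.single None (Suc 0)"
    by (simp add: single_add[symmetric])
  show ?thesis using a by (simp add: monS_def eq ac_simps)
qed

lemma finite_Tsel: "finite T \<Longrightarrow> finite (Tsel T B)"
  by (rule finite_subset[of _ "Pow T"]) (auto simp: Tsel_def)

lemma Tsel_finite: "finite T \<Longrightarrow> S \<in> Tsel T B \<Longrightarrow> finite S"
  by (auto simp: Tsel_def intro: finite_subset)

lemma Pf_formula:
  fixes f :: "'u \<Rightarrow> 'a::field" and T :: "'u list set"
  assumes finT: "finite T" and finB: "finite B"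
  shows "Pf d r f T B K = (\<Sum>S\<in>Tsel T B. Poly_Mapping.single (monS S) (Wf d r f S K))"
  using finB
proof (induction B arbitrary: K rule: finite_induct)
  case empty
  have "Tsel T {} = {{}}" by (auto simp: Tsel_def)
  thus ?case by (simp add: Pf_def Wf_empty monS_def ext_one_def)
next
  case (insert a B)
  define PB where "PB = Pf d r f T B"
  define Z where "Z = (\<lambda>K. mp_var None * Q_elem d r f T a K)"
  define F where "F S K = Poly_Mapping.single (monS S) (Wf d r f S K)" for S K
  define Ta where "Ta = {t\<in>T. t ! 0 = a}"
  define New where "New = (\<lambda>(t,S). insert t S) ` (Ta \<times> Tsel T B)"
  have IH: "PB K = (\<Sum>S\<in>Tsel T B. F S K)" for K using insert.IH by (simp add: PB_def F_def)
  have unf: "Pf d r f T (insert a B) = ext_mult r (ext_add ext_one Z) PB"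
    unfolding Pf_def PB_def Z_def using insert.hyps by (simp add: fold_mult_insert)
  have finTa: "finite Ta" using finT by (simp add: Ta_def)
  have finTB: "finite (Tsel T B)" using finT by (rule finite_Tsel)
  have tS: "t \<notin> S" "finite S" if "t \<in> Ta" "S \<in> Tsel T B" for t S
    using that insert.hyps finT by (auto simp: Ta_def Tsel_def intro: finite_subset)
  have inj: "inj_on (\<lambda>(t,S). insert t S) (Ta \<times> Tsel T B)"
  proof (rule inj_onI, clarify)
    fix t S t' S'
    assume as: "t \<in> Ta" "S \<in> Tsel T B" "t' \<in> Ta" "S' \<in> Tsel T B" "insert t S = insert t' S'"
    have "t = t'"
    proof (rule ccontr)
      assume "t \<noteq> t'"
      hence "t \<in> S'" using as by blast
      thus False using tS[OF as(3,4)] as insert.hyps by (auto simp: Ta_def Tsel_def)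
    qed
    moreover have "S = S'" using as tS[OF as(1,2)] tS[OF as(3,4)] \<open>t = t'\<close>
      by (metis insert_ident)
    ultimately show "t = t' \<and> S = S'" by simp
  qed
  have split: "Tsel T (insert a B) = Tsel T B \<union> New" and disj: "Tsel T B \<inter> New = {}"
  proof -
    show "Tsel T B \<inter> New = {}"
    proof (rule ccontr)
      assume "Tsel T B \<inter> New \<noteq> {}"
      then obtain t S where "t \<in> Ta" "insert t S \<in> Tsel T B" by (auto simp: New_def)
      hence "t ! 0 = a" "t ! 0 \<in> B" by (auto simp: Ta_def Tsel_def)
      thus False using insert.hyps(2) by simp
    qed
    show "Tsel T (insert a B) = Tsel T B \<union> New"
    proof
      show "Tsel T B \<union> New \<subseteq> Tsel T (insert a B)"
      proof
        fix S' assume "S' \<in> Tsel T B \<union> New"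
        thus "S' \<in> Tsel T (insert a B)"
        proof
          assume "S' \<in> Tsel T B" thus ?thesis by (auto simp: Tsel_def)
        next
          assume "S' \<in> New"
          then obtain t S where tS': "t \<in> Ta" "S \<in> Tsel T B" "S' = insert t S" by (auto simp: New_def)
          have sub: "S \<subseteq> {t\<in>T. t ! 0 \<in> B}" and ij: "inj_on (\<lambda>t. t ! 0) S" using tS' by (simp_all add: Tsel_def)
          have t0: "t ! 0 = a" "t \<in> T" using tS' by (simp_all add: Ta_def)
          have "t ! 0 \<notin> (\<lambda>u. u ! 0) ` S" using sub t0 insert.hyps(2) by auto
          hence "inj_on (\<lambda>u. u ! 0) (insert t S)" using ij by auto
          moreover have "insert t S \<subseteq> {t\<in>T. t ! 0 \<in> insert a B}" using sub t0 by blast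
          ultimately show ?thesis unfolding Tsel_def tS'(3) by blast
        qed
      qed
    next
      show "Tsel T (insert a B) \<subseteq> Tsel T B \<union> New"
      proof
        fix S' assume S': "S' \<in> Tsel T (insert a B)"
        show "S' \<in> Tsel T B \<union> New"
        proof (cases "\<exists>t\<in>S'. t ! 0 = a")
          case False
          hence "S' \<in> Tsel T B" using S' by (auto simp: Tsel_def)
          thus ?thesis by simp
        next
          case True
          then obtain t where t: "t \<in> S'" "t ! 0 = a" by blast
          have "S' - {t} \<in> Tsel T B"
          proof -
            have "\<forall>u\<in>S' - {t}. u ! 0 \<noteq> a"
              using S' t by (auto simp: Tsel_def inj_on_def)
            thus ?thesis using S' by (auto simp: Tsel_def inj_on_def)
          qed
          moreover have "t \<in> Ta" using S' t by (auto simp: Tsel_def Ta_def)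
          moreover have "S' = insert t (S' - {t})" using t by blast
          ultimately have "S' \<in> New" unfolding New_def by blast
          thus ?thesis by simp
        qed
      qed
    qed
  qed
  show ?case
  proof (cases "K \<subseteq> {0..<r}")
    case False
    have "Wf d r f S K = 0" for S using sok_Wf[of r d f S] False by (simp add: sok_def)
    thus ?thesis using False by (simp add: unf ext_mult_def)
  next
    case True
    have finK: "finite (Pow K)" using True finite_subset by blast
    have e1: "ext_mult r (ext_add ext_one Z) PB K = ext_mult r ext_one PB K + ext_mult r Z PB K"
      using True by (simp add: ext_mult_def ext_add_def distrib_right sum.distrib)
    have e2: "ext_mult r ext_one PB K = (\<Sum>S\<in>Tsel T B. F S K)"
      using ext_mult_one[OF sok_Pf, of r d f T B] IH by (simp add: PB_def)
    have "ext_mult r Z PB K = (\<Sum>I\<in>Pow K. Z I * PB (K - I))"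
      using True by (simp add: ext_mult_def)
    also have "\<dots> = (\<Sum>I\<in>Pow K. \<Sum>t\<in>Ta. \<Sum>S\<in>Tsel T B.
        Poly_Mapping.single (Poly_Mapping.single None 1 + Poly_Mapping.single (Some t) 1 + monS S)
          (Mf d r f t I * Wf d r f S (K - I)))"
    proof (rule sum.cong[OF refl])
      fix I
      have "Z I * PB (K - I) = (\<Sum>t\<in>Ta. mp_var None * (mp_const (Mf d r f t I) * mp_var (Some t))) *
           (\<Sum>S\<in>Tsel T B. Poly_Mapping.single (monS S) (Wf d r f S (K - I)))"
        by (simp add: Z_def Q_elem_def Ta_def IH F_def M_elem_eq mpc_def sum_distrib_left)
      also have "\<dots> = (\<Sum>t\<in>Ta. \<Sum>S\<in>Tsel T B. mp_var None * (mp_const (Mf d r f t I) * mp_var (Some t)) *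
           Poly_Mapping.single (monS S) (Wf d r f S (K - I)))"
        by (rule sum_product)
      also have "\<dots> = (\<Sum>t\<in>Ta. \<Sum>S\<in>Tsel T B.
        Poly_Mapping.single (Poly_Mapping.single None 1 + Poly_Mapping.single (Some t) 1 + monS S)
          (Mf d r f t I * Wf d r f S (K - I)))"
        by (simp only: term_eq)
      finally show "Z I * PB (K - I) = (\<Sum>t\<in>Ta. \<Sum>S\<in>Tsel T B.
        Poly_Mapping.single (Poly_Mapping.single None 1 + Poly_Mapping.single (Some t) 1 + monS S)
          (Mf d r f t I * Wf d r f S (K - I)))" .
    qed
    also have "\<dots> = (\<Sum>t\<in>Ta. \<Sum>S\<in>Tsel T B. \<Sum>I\<in>Pow K.
        Poly_Mapping.single (Poly_Mapping.single None 1 + Poly_Mapping.single (Some t) 1 + monS S)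
          (Mf d r f t I * Wf d r f S (K - I)))"
      by (rule trans[OF sum.swap], rule sum.cong[OF refl], rule sum.swap)
    also have "\<dots> = (\<Sum>t\<in>Ta. \<Sum>S\<in>Tsel T B. F (insert t S) K)"
    proof (intro sum.cong refl)
      fix t S assume "t \<in> Ta" "S \<in> Tsel T B"
      note ts = tS[OF this]
      show "(\<Sum>I\<in>Pow K. Poly_Mapping.single (Poly_Mapping.single None 1 + Poly_Mapping.single (Some t) 1 + monS S)
          (Mf d r f t I * Wf d r f S (K - I))) = F (insert t S) K"
        unfolding single_sum[symmetric] F_def monS_insert[OF ts(2,1)] Wf_insert[OF ts(2,1)]
        using True by (simp add: ext_mult_def)
    qed
    also have "\<dots> = (\<Sum>(t,S)\<in>Ta \<times> Tsel T B. F (insert t S) K)"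
      by (simp add: sum.cartesian_product)
    also have "\<dots> = (\<Sum>S\<in>New. F S K)"
      unfolding New_def by (subst sum.reindex[OF inj]) (simp add: comp_def case_prod_beta)
    finally have e3: "ext_mult r Z PB K = (\<Sum>S\<in>New. F S K)" .
    have finNew: "finite New" using finTa finTB by (simp add: New_def)
    show ?thesis
      unfolding unf e1 e2 e3 split
      by (subst sum.union_disjoint[OF finTB finNew disj]) (simp add: F_def)
  qed
qed

lemma lookup_monS_None: "finite S \<Longrightarrow> Poly_Mapping.lookup (monS S) None = card S"
  by (simp add: monS_def lookup_add lookup_sum lookup_single)

lemma lookup_monS_Some: "finite S \<Longrightarrow> Poly_Mapping.lookup (monS S) (Some t) = (if t \<in> S then 1 else 0)"
proof -
  assume fin: "finite S"
  have "(\<Sum>x\<in>S. (1::nat) when Some x = Some t) = (\<Sum>x\<in>S. if x = t then 1 else 0)"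
    by (intro sum.cong) (auto simp: when_def)
  also have "\<dots> = (if t \<in> S then 1 else 0)" using fin by (simp add: sum.delta')
  finally show ?thesis by (simp add: monS_def lookup_add lookup_sum lookup_single)
qed

lemma monS_inj: "finite S \<Longrightarrow> finite S' \<Longrightarrow> monS S = monS S' \<Longrightarrow> S = S'"
proof -
  assume a: "finite S" "finite S'" "monS S = monS S'"
  have "(t \<in> S) = (t \<in> S')" for t
    using arg_cong[OF a(3), of "\<lambda>m. Poly_Mapping.lookup m (Some t)"] a(1,2)
    by (simp add: lookup_monS_Some split: if_splits)
  thus ?thesis by blast
qed

lemma length_concat_const: "length (concat (map (\<lambda>t. map (g t) [1..<d]) ts)) = length ts * (d - 1)"
  by (induction ts) auto

lemma set_concat_eq: "set (concat (map (\<lambda>t. map (\<lambda>i. f (t ! i)) [1..<d]) ts))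
   = (\<lambda>(t,i). f (t ! i)) ` (set ts \<times> {1..<d})"
  by auto

lemma Wf_nz_iff:
  fixes f :: "'u \<Rightarrow> 'a::field"
  assumes c2: "(1::'a) + 1 = 0" and finS: "finite S" and cardS: "card S = k"
  shows "Wf d ((d - 1) * k) f S {0..<(d - 1) * k} \<noteq> 0 \<longleftrightarrow> inj_on (\<lambda>(t,i). f (t ! i)) (S \<times> {1..<d})"
proof -
  obtain ts where ts: "set ts = S" "distinct ts" using finite_distinct_list[OF finS] by blast
  define xs where "xs = concat (map (\<lambda>t. map (\<lambda>i. f (t ! i)) [1..<d]) ts)"
  have W: "Wf d ((d - 1) * k) f S = Vf ((d - 1) * k) xs"
    using Wf_list[OF ts(2)] ts(1) by (simp add: xs_def)
  have len: "length xs = (d - 1) * k"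
    using length_concat_const[of "\<lambda>t i. f (t ! i)" d ts] ts cardS
    by (simp add: xs_def mult.commute distinct_card[OF ts(2), symmetric])
  have st: "set xs = (\<lambda>(t,i). f (t ! i)) ` (S \<times> {1..<d})"
    by (simp only: xs_def set_concat_eq ts(1))
  have cd: "card (S \<times> {1..<d}) = length xs" using len cardS by (simp add: card_cartesian_product mult.commute)
  have "distinct xs \<longleftrightarrow> inj_on (\<lambda>(t,i). f (t ! i)) (S \<times> {1..<d})"
  proof
    assume "distinct xs"
    hence "card (set xs) = length xs" by (rule distinct_card)
    thus "inj_on (\<lambda>(t,i). f (t ! i)) (S \<times> {1..<d})"
      using st cd finS by (simp add: inj_on_iff_eq_card)
  next
    assume "inj_on (\<lambda>(t,i). f (t ! i)) (S \<times> {1..<d})"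
    hence "card (set xs) = length xs" using st cd finS by (simp add: card_image)
    thus "distinct xs" by (rule card_distinct)
  qed
  moreover have "Vf ((d - 1) * k) xs {0..<(d - 1) * k} \<noteq> 0 \<longleftrightarrow> distinct xs"
  proof
    assume "Vf ((d - 1) * k) xs {0..<(d - 1) * k} \<noteq> 0"
    thus "distinct xs" using Vf_nondistinct[OF c2] by fastforce
  next
    assume "distinct xs"
    thus "Vf ((d - 1) * k) xs {0..<(d - 1) * k} \<noteq> 0"
      using Vf_distinct_nz[OF c2, of xs "(d - 1) * k"] len by simp
  qed
  ultimately show ?thesis using W by simp
qed

theorem mainTheorem18:
  fixes d k :: nat
    and U :: "nat \<Rightarrow> 'u set"
    and T :: "'u list set"
    and f :: "'u \<Rightarrow> 'a::field"
  assumes "d \<ge> 2" and "k \<ge> 1"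
    and "\<forall>i<d. finite (U i)"
    and "\<forall>i<d. \<forall>j<d. i \<noteq> j \<longrightarrow> U i \<inter> U j = {}"
    and "T \<subseteq> {t. length t = d \<and> (\<forall>i<d. t ! i \<in> U i)}"
    and "(1::'a) + 1 = 0"
    and "inj_on f (\<Union>i\<in>{1..<d}. U i)"
  shows "z_degree_le (P_elem d ((d - 1) * k) f T (U 0)) k
    \<and> (zcoeff_nonzero (P_elem d ((d - 1) * k) f T (U 0) {0..<(d - 1) * k}) k
       \<longleftrightarrow> (\<exists>S\<subseteq>T. card S = k \<and>
              (\<forall>a\<in>S. \<forall>b\<in>S. a \<noteq> b \<longrightarrow> (\<forall>i<d. a ! i \<noteq> b ! i))))"
proof -
  note d2 = assms(1) and k1 = assms(2) and finU = assms(3) and disjU = assms(4)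
    and Tsub = assms(5) and c2 = assms(6) and injf = assms(7)
  define r where "r = (d - 1) * k"
  define Sel where "Sel = Tsel T (U 0)"
  have finT: "finite T"
  proof (rule finite_subset[OF _ finite_lists_length_eq[of "\<Union>i<d. U i" d]])
    show "finite (\<Union>i<d. U i)" using finU by simp
    show "T \<subseteq> {xs. set xs \<subseteq> (\<Union>i<d. U i) \<and> length xs = d}"
      using Tsub by (fastforce simp: in_set_conv_nth)
  qed
  have fin0: "finite (U 0)" using finU d2 by simp
  have PF: "P_elem d r f T (U 0) K = (\<Sum>S\<in>Sel. Poly_Mapping.single (monS S) (Wf d r f S K))" for K
    using Pf_formula[OF finT fin0, of d r f K] by (simp add: Pf_def P_elem_def Sel_def)
  have finSel: "finite Sel" using finT by (simp add: Sel_def finite_Tsel)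
  have finS: "S \<in> Sel \<Longrightarrow> finite S" for S using finT by (simp add: Sel_def Tsel_finite)
  have part1: "z_degree_le (P_elem d r f T (U 0)) k"
    unfolding z_degree_le_def
  proof (intro allI ballI)
    fix K m assume m: "m \<in> Poly_Mapping.keys (P_elem d r f T (U 0) K)"
    then obtain S where S: "S \<in> Sel" "m \<in> Poly_Mapping.keys (Poly_Mapping.single (monS S) (Wf d r f S K))"
      using keys_sum[of "\<lambda>S. Poly_Mapping.single (monS S) (Wf d r f S K)" Sel] unfolding PF by blast
    hence nz: "Wf d r f S K \<noteq> 0" and mS: "m = monS S" by (auto split: if_splits)
    from hom_Wf[OF finS[OF S(1)], of r d f] nz have K: "K \<subseteq> {0..<r}" "card K = (d - 1) * card S"
      by (auto simp: hom_def)
    have "card K \<le> r" using card_mono[OF _ K(1)] by simp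
    hence "(d - 1) * card S \<le> (d - 1) * k" using K by (simp add: r_def)
    hence "card S \<le> k" using d2 by simp
    thus "Poly_Mapping.lookup m None \<le> k" using mS lookup_monS_None[OF finS[OF S(1)]] by simp
  qed
  have disj_iff: "Wf d r f S {0..<r} \<noteq> 0 \<longleftrightarrow> (\<forall>a\<in>S. \<forall>b\<in>S. a \<noteq> b \<longrightarrow> (\<forall>i<d. a ! i \<noteq> b ! i))"
    if S: "S \<in> Sel" "card S = k" for S
  proof -
    have fS: "finite S" using finS[OF S(1)] .
    have inj0: "inj_on (\<lambda>t. t ! 0) S" and subT: "S \<subseteq> T" using S(1) by (auto simp: Sel_def Tsel_def)
    have coord: "t ! i \<in> U i" if "t \<in> S" "i < d" for t i using that subT Tsub by blast
    have "inj_on (\<lambda>(t,i). f (t ! i)) (S \<times> {1..<d}) \<longleftrightarrow> (\<forall>a\<in>S. \<forall>b\<in>S. \<forall>i\<in>{1..<d}. a ! i = b ! i \<longrightarrow> a = b)"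
    proof
      assume H: "inj_on (\<lambda>(t,i). f (t ! i)) (S \<times> {1..<d})"
      show "\<forall>a\<in>S. \<forall>b\<in>S. \<forall>i\<in>{1..<d}. a ! i = b ! i \<longrightarrow> a = b"
      proof (intro ballI impI)
        fix a b i assume "a \<in> S" "b \<in> S" "i \<in> {1..<d}" "a ! i = b ! i"
        thus "a = b" using inj_onD[OF H, of "(a,i)" "(b,i)"] by auto
      qed
    next
      assume H: "\<forall>a\<in>S. \<forall>b\<in>S. \<forall>i\<in>{1..<d}. a ! i = b ! i \<longrightarrow> a = b"
      show "inj_on (\<lambda>(t,i). f (t ! i)) (S \<times> {1..<d})"
      proof (rule inj_onI, clarify)
        fix a i b j assume as: "a \<in> S" "i \<in> {1..<d}" "b \<in> S" "j \<in> {1..<d}" "f (a ! i) = f (b ! j)"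
        have ai: "a ! i \<in> U i" "b ! j \<in> U j" using coord as by auto
        have "a ! i = b ! j"
          using inj_onD[OF injf as(5)] ai as(2,4) by blast
        moreover have "i = j"
        proof (rule ccontr)
          assume "i \<noteq> j"
          hence "U i \<inter> U j = {}" using disjU as(2,4) by auto
          thus False using ai \<open>a ! i = b ! j\<close> by auto
        qed
        ultimately have "a ! j = b ! j" "i = j" by simp_all
        hence "a = b" using H as(1,3,4) by blast
        thus "a = b \<and> i = j" using \<open>i = j\<close> by simp
      qed
    qed
    moreover have "Wf d r f S {0..<r} \<noteq> 0 \<longleftrightarrow> inj_on (\<lambda>(t,i). f (t ! i)) (S \<times> {1..<d})"
      unfolding r_def by (rule Wf_nz_iff[OF c2 fS S(2)])
    moreover have "(\<forall>a\<in>S. \<forall>b\<in>S. \<forall>i\<in>{1..<d}. a ! i = b ! i \<longrightarrow> a = b)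
        \<longleftrightarrow> (\<forall>a\<in>S. \<forall>b\<in>S. a \<noteq> b \<longrightarrow> (\<forall>i<d. a ! i \<noteq> b ! i))"
    proof
      assume H: "\<forall>a\<in>S. \<forall>b\<in>S. \<forall>i\<in>{1..<d}. a ! i = b ! i \<longrightarrow> a = b"
      show "\<forall>a\<in>S. \<forall>b\<in>S. a \<noteq> b \<longrightarrow> (\<forall>i<d. a ! i \<noteq> b ! i)"
      proof (intro ballI impI allI)
        fix a b i assume as: "a \<in> S" "b \<in> S" "a \<noteq> b" "i < d"
        show "a ! i \<noteq> b ! i"
        proof (cases "i = 0")
          case True thus ?thesis using inj_onD[OF inj0 _ as(1,2)] as(3) by auto
        next
          case False
          hence "i \<in> {1..<d}" using as(4) by simp
          thus ?thesis using H as(1,2,3) by blast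
        qed
      qed
    next
      assume H: "\<forall>a\<in>S. \<forall>b\<in>S. a \<noteq> b \<longrightarrow> (\<forall>i<d. a ! i \<noteq> b ! i)"
      show "\<forall>a\<in>S. \<forall>b\<in>S. \<forall>i\<in>{1..<d}. a ! i = b ! i \<longrightarrow> a = b"
      proof (intro ballI impI)
        fix a b i assume as: "a \<in> S" "b \<in> S" "i \<in> {1..<d}" "a ! i = b ! i"
        have "i < d" using as(3) by simp
        show "a = b"
        proof (rule ccontr)
          assume "a \<noteq> b"
          hence "a ! i \<noteq> b ! i" using H as(1,2) \<open>i < d\<close> by blast
          thus False using as(4) by simp
        qed
      qed
    qed
    ultimately show ?thesis by simp
  qed
  have lk: "Poly_Mapping.lookup (P_elem d r f T (U 0) {0..<r}) x
     = (\<Sum>S\<in>Sel. if monS S = x then Wf d r f S {0..<r} else 0)" for x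
    unfolding PF by (simp add: lookup_sum lookup_single when_def)
  have part2: "zcoeff_nonzero (P_elem d r f T (U 0) {0..<r}) k
     \<longleftrightarrow> (\<exists>S\<subseteq>T. card S = k \<and> (\<forall>a\<in>S. \<forall>b\<in>S. a \<noteq> b \<longrightarrow> (\<forall>i<d. a ! i \<noteq> b ! i)))"
  proof
    assume "zcoeff_nonzero (P_elem d r f T (U 0) {0..<r}) k"
    then obtain m where m: "Poly_Mapping.lookup m None = 0"
      "(\<Sum>S\<in>Sel. if monS S = m + Poly_Mapping.single None k then Wf d r f S {0..<r} else 0) \<noteq> 0"
      unfolding zcoeff_nonzero_def lk by blast
    then obtain S where S0: "S \<in> Sel" "(if monS S = m + Poly_Mapping.single None k then Wf d r f S {0..<r} else 0) \<noteq> 0"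
      using sum.not_neutral_contains_not_neutral by blast
    hence S: "S \<in> Sel" "monS S = m + Poly_Mapping.single None k" "Wf d r f S {0..<r} \<noteq> 0"
      by (auto split: if_splits)
    have "card S = k"
      using arg_cong[OF S(2), of "\<lambda>m. Poly_Mapping.lookup m None"] lookup_monS_None[OF finS[OF S(1)]] m(1)
      by (simp add: lookup_add)
    moreover have "S \<subseteq> T" using S(1) by (auto simp: Sel_def Tsel_def)
    ultimately show "\<exists>S\<subseteq>T. card S = k \<and> (\<forall>a\<in>S. \<forall>b\<in>S. a \<noteq> b \<longrightarrow> (\<forall>i<d. a ! i \<noteq> b ! i))"
      using disj_iff[OF S(1)] S(3) by blast
  next
    assume "\<exists>S\<subseteq>T. card S = k \<and> (\<forall>a\<in>S. \<forall>b\<in>S. a \<noteq> b \<longrightarrow> (\<forall>i<d. a ! i \<noteq> b ! i))"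
    then obtain S where S: "S \<subseteq> T" "card S = k" "\<forall>a\<in>S. \<forall>b\<in>S. a \<noteq> b \<longrightarrow> (\<forall>i<d. a ! i \<noteq> b ! i)"
      by blast
    have fS: "finite S" using S(2) k1 by (intro card_ge_0_finite) simp
    have "S \<in> Sel"
    proof -
      have "S \<subseteq> {t\<in>T. t ! 0 \<in> U 0}" using S(1) Tsub d2 by force
      moreover have "inj_on (\<lambda>t. t ! 0) S"
      proof (rule inj_onI, rule ccontr)
        fix x y assume "x \<in> S" "y \<in> S" "x ! 0 = y ! 0" "x \<noteq> y"
        moreover have "(0::nat) < d" using d2 by simp
        ultimately show False using S(3) by blast
      qed
      ultimately show ?thesis by (simp add: Sel_def Tsel_def)
    qed
    note SS = this
    define m where "m = (\<Sum>t\<in>S. Poly_Mapping.single (Some t) (1::nat))"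
    have m0: "Poly_Mapping.lookup m None = 0" by (simp add: m_def lookup_sum lookup_single)
    have mS: "m + Poly_Mapping.single None k = monS S" using S(2) by (simp add: m_def monS_def add.commute)
    have "(\<Sum>S'\<in>Sel. if monS S' = monS S then Wf d r f S' {0..<r} else 0)
        = (\<Sum>S'\<in>Sel. if S' = S then Wf d r f S' {0..<r} else 0)"
    proof (rule sum.cong[OF refl])
      fix S' assume "S' \<in> Sel"
      hence "(monS S' = monS S) = (S' = S)" using monS_inj[OF finS[OF \<open>S' \<in> Sel\<close>] fS] by blast
      thus "(if monS S' = monS S then Wf d r f S' {0..<r} else 0) = (if S' = S then Wf d r f S' {0..<r} else 0)"
        by simp
    qed
    also have "\<dots> = Wf d r f S {0..<r}" using SS finSel by (simp add: sum.delta')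
    finally have "Poly_Mapping.lookup (P_elem d r f T (U 0) {0..<r}) (m + Poly_Mapping.single None k)
        = Wf d r f S {0..<r}" unfolding lk mS .
    moreover have "Wf d r f S {0..<r} \<noteq> 0" using disj_iff[OF SS S(2)] S(3) by simp
    ultimately show "zcoeff_nonzero (P_elem d r f T (U 0) {0..<r}) k"
      unfolding zcoeff_nonzero_def using m0 by (intro exI[of _ m]) simp
  qed
  show ?thesis using part1 part2 by (simp add: r_def)
qed

end
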